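(* With the notation of the context, for every $\varepsilon>0$, $$\mathcal D:=\sum_{\substack{a\ge1\\(a,q)=1}}\frac{\mu(a)}{a^{3/2}}\sum_{\substack{m,n\ge1\\ m=na}}\frac{\tau(m)\,\tau_3(n,F_{a,\sqrt q})}{\sqrt{mn}}V\Big(\frac mq\Big)\ll_{\kappa,\varepsilon}q^{\varepsilon}$$ as $q\to\infty$ through primes.
   Context: $q$ prime, $\kappa$ fixed positive even integer, $\gamma(s,\kappa)=\pi^{-s}\Gamma\big(\frac{s+\frac{\kappa-1}2}{2}\big)\Gamma\big(\frac{s+\frac{\kappa+1}2}{2}\big)$. $G_1,G_2$ are even entire functions with $G_i(0)=1$, rapidly decaying in vertical strips. $V_i$ ($i=1,2$): $V_1(x)=\frac1{2\pi i}\int_{(1)}\frac{G_1(u)}{u}\frac{\gamma(\frac12+u,\kappa)}{\gamma(\frac12,\kappa)}x^{-u}du$, $V_2(x)=\frac1{2\pi i}\int_{(1)}\frac{G_2(u)}{u}\frac{\gamma(\frac12+u,\kappa)^2}{\gamma(\frac12,\kappa)^2}x^{-u}du$; $V(x)=\sum_{(e,q)=1}V_2(e^2x)/e$. $F_a(x_1,x_2,x_3)=\sum_{(e_1e_2e_3,q)=1}(e_1e_2e_3)^{-1}V_1(ax_1e_1e_2)V_1(ax_2e_1e_3)V_1(ax_3e_2e_3)$ and $\tau_3(n,F_{a,\sqrt q})=\sum_{n_1n_2n_3=n}F_a(n_1/\sqrt q,n_2/\sqrt q,n_3/\sqrt q)$. $\tau$ is the divisor function, $\mu$ the Möbius function.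 *)

theory Defs
  imports "HOL-Analysis.Analysis" "HOL-Computational_Algebra.Squarefree"
begin

definition moebius_mu :: "nat \<Rightarrow> real" where
  "moebius_mu n = (if n = 0 \<or> \<not> squarefree n then 0
                   else (-1) ^ card (prime_factors n))"

definition divisor_count :: "nat \<Rightarrow> real" where
  "divisor_count n = real (card {d. d dvd n \<and> d > 0})"

text \<open>(1/(2 pi i)) times the integral over the vertical line Re u = 1:
  with u = 1 + i t this is (1/(2 pi)) times the integral over t of f(1 + i t).\<close>
definition vert_int1 :: "(complex \<Rightarrow> complex) \<Rightarrow> complex" where
  "vert_int1 f = (LINT t|lborel. f (Complex 1 t)) / complex_of_real (2 * pi)"

definition gamma_fac :: "complex \<Rightarrow> nat \<Rightarrow> complex" where
  "gamma_fac s \<kappa> = complex_of_real pi powr (- s)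
      * Gamma ((s + (of_nat \<kappa> - 1) / 2) / 2)
      * Gamma ((s + (of_nat \<kappa> + 1) / 2) / 2)"

definition admissible_G :: "(complex \<Rightarrow> complex) \<Rightarrow> bool" where
  "admissible_G G \<longleftrightarrow> G holomorphic_on UNIV \<and> (\<forall>z. G (- z) = G z) \<and> G 0 = 1 \<and>
     (\<forall>a b A::real. \<exists>C. \<forall>z. a \<le> Re z \<and> Re z \<le> b \<longrightarrow>
          norm (G z) \<le> C * (1 + \<bar>Im z\<bar>) powr (- A))"

definition V1 :: "(complex \<Rightarrow> complex) \<Rightarrow> nat \<Rightarrow> real \<Rightarrow> complex" where
  "V1 G \<kappa> x = vert_int1 (\<lambda>u. G u / u * (gamma_fac (1/2 + u) \<kappa> / gamma_fac (1/2) \<kappa>)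
                                 * complex_of_real x powr (- u))"

definition V2 :: "(complex \<Rightarrow> complex) \<Rightarrow> nat \<Rightarrow> real \<Rightarrow> complex" where
  "V2 G \<kappa> x = vert_int1 (\<lambda>u. G u / u * (gamma_fac (1/2 + u) \<kappa> ^ 2 / gamma_fac (1/2) \<kappa> ^ 2)
                                 * complex_of_real x powr (- u))"

definition Vsum :: "(complex \<Rightarrow> complex) \<Rightarrow> nat \<Rightarrow> nat \<Rightarrow> real \<Rightarrow> complex" where
  "Vsum G2 \<kappa> q x = (\<Sum>\<^sub>\<infinity> e \<in> {e::nat. e \<ge> 1 \<and> coprime e q}.
                        V2 G2 \<kappa> (real e ^ 2 * x) / of_nat e)"

definition Ffun :: "(complex \<Rightarrow> complex) \<Rightarrow> nat \<Rightarrow> nat \<Rightarrow> nat \<Rightarrow> real \<Rightarrow> real \<Rightarrow> real \<Rightarrow> complex" where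
  "Ffun G1 \<kappa> q a x1 x2 x3 =
     (\<Sum>\<^sub>\<infinity> (e1, e2, e3) \<in> {(e1::nat, e2::nat, e3::nat). e1 \<ge> 1 \<and> e2 \<ge> 1 \<and> e3 \<ge> 1 \<and>
                                   coprime (e1 * e2 * e3) q}.
        V1 G1 \<kappa> (real a * x1 * real e1 * real e2) * V1 G1 \<kappa> (real a * x2 * real e1 * real e3)
        * V1 G1 \<kappa> (real a * x3 * real e2 * real e3) / of_nat (e1 * e2 * e3))"

definition tau3F :: "(complex \<Rightarrow> complex) \<Rightarrow> nat \<Rightarrow> nat \<Rightarrow> nat \<Rightarrow> nat \<Rightarrow> complex" where
  "tau3F G1 \<kappa> q a n =
     (\<Sum>(n1, n2, n3) \<in> {(n1::nat, n2::nat, n3::nat). n1 * n2 * n3 = n}.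
        Ffun G1 \<kappa> q a (real n1 / sqrt (real q)) (real n2 / sqrt (real q)) (real n3 / sqrt (real q)))"

definition Dsum :: "(complex \<Rightarrow> complex) \<Rightarrow> (complex \<Rightarrow> complex) \<Rightarrow> nat \<Rightarrow> nat \<Rightarrow> complex" where
  "Dsum G1 G2 \<kappa> q =
     (\<Sum>\<^sub>\<infinity> a \<in> {a::nat. a \<ge> 1 \<and> coprime a q}.
        complex_of_real (moebius_mu a / real a powr (3/2)) *
        (\<Sum>\<^sub>\<infinity> (m, n) \<in> {(m::nat, n::nat). m \<ge> 1 \<and> n \<ge> 1 \<and> m = n * a}.
            complex_of_real (divisor_count m) * tau3F G1 \<kappa> q a n
            / complex_of_real (sqrt (real m * real n))
            * Vsum G2 \<kappa> q (real m / real q)))"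

end

theory Submission
  imports Defs "HOL-Complex_Analysis.Complex_Analysis" "HOL-Probability.Sinc_Integral"
begin


lemma norm_Gamma_le:
  fixes z :: complex assumes "Re z > 0"
  shows "norm (Gamma z) \<le> Gamma (Re z)"
proof -
  have 1: "((\<lambda>t. of_real t powr (z - 1) / of_real (exp t)) has_integral Gamma z) {0..}"
    by (rule Gamma_integral_complex) fact
  have 2: "((\<lambda>t. t powr (Re z - 1) / exp t) has_integral Gamma (Re z)) {0..}"
    by (rule Gamma_integral_real) fact
  have "norm (integral {0..} (\<lambda>t. of_real t powr (z - 1) / of_real (exp t))) \<le> integral {0..} (\<lambda>t. t powr (Re z - 1) / exp t)"
  proof (rule integral_norm_bound_integral)
    show "(\<lambda>t. of_real t powr (z - 1) / of_real (exp t)) integrable_on {0..}" using 1 by blast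
    show "(\<lambda>t. t powr (Re z - 1) / exp t) integrable_on {0..}" using 2 by blast
    fix t :: real assume "t \<in> {0..}"
    show "norm (of_real t powr (z - 1) / of_real (exp t)) \<le> t powr (Re z - 1) / exp t"
      using \<open>t \<in> {0..}\<close> by (simp add: norm_divide norm_powr_real_powr)
  qed
  with 1 2 show ?thesis by (simp add: integral_unique)
qed

lemma Gamma_bounded_strip:
  fixes c1 c2 :: real assumes "c1 > 0"
  shows "\<exists>M. \<forall>z::complex. c1 \<le> Re z \<and> Re z \<le> c2 \<longrightarrow> norm (Gamma z) \<le> M"
proof -
  have "continuous_on {c1..c2} (Gamma :: real \<Rightarrow> real)"
    using assms by (intro continuous_on_Gamma) (auto elim!: nonpos_Ints_cases)
  then have "compact (Gamma ` {c1..c2})" by (intro compact_continuous_image) auto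
  then obtain M where M: "\<And>x. x \<in> {c1..c2} \<Longrightarrow> norm (Gamma x :: real) \<le> M"
    by (meson bounded_iff compact_imp_bounded imageI)
  show ?thesis
  proof (intro exI allI impI)
    fix z :: complex assume z: "c1 \<le> Re z \<and> Re z \<le> c2"
    have "norm (Gamma z) \<le> Gamma (Re z)" using z assms by (intro norm_Gamma_le) auto
    also have "\<dots> \<le> M" using M[of "Re z"] z by auto
    finally show "norm (Gamma z) \<le> M" .
  qed
qed


lemma integrable_inv1sq: "integrable lborel (\<lambda>t::real. inverse (1 + t^2))"
  using integrable_inverse_1_plus_square unfolding set_integrable_def by simp

lemma integral_sym_tendsto:
  fixes f :: "real \<Rightarrow> complex"
  assumes f: "integrable lborel f"
  shows "((\<lambda>T. integral {-T..T} f) \<longlongrightarrow> (LINT t|lborel. f t)) at_top"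
proof -
  have fm: "f \<in> borel_measurable lborel" using f by auto
  have "((\<lambda>T. LINT t|lborel. indicator {-T..T} t *\<^sub>R f t) \<longlongrightarrow> (LINT t|lborel. f t)) at_top"
  proof (rule integral_dominated_convergence_at_top[where w="\<lambda>t. norm (f t)"])
    show "f \<in> borel_measurable lborel" by fact
    show "\<And>T. (\<lambda>t. indicator {-T..T} t *\<^sub>R f t) \<in> borel_measurable lborel" using fm by measurable
    show "integrable lborel (\<lambda>t. norm (f t))" using f by auto
    show "AE t in lborel. ((\<lambda>T. indicator {-T..T} t *\<^sub>R f t) \<longlongrightarrow> f t) at_top"
    proof (rule AE_I2)
      fix t :: real
      have "eventually (\<lambda>T. indicator {-T..T} t *\<^sub>R f t = f t) at_top"
        using eventually_ge_at_top[of "\<bar>t\<bar>"] by eventually_elim (auto simp: indicator_def)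
      then show "((\<lambda>T. indicator {-T..T} t *\<^sub>R f t) \<longlongrightarrow> f t) at_top"
        by (rule tendsto_eventually)
    qed
    show "\<forall>\<^sub>F T in at_top. AE t in lborel. norm (indicator {-T..T} t *\<^sub>R f t) \<le> norm (f t)"
      by (auto simp: indicator_def)
  qed
  moreover have "(LINT t|lborel. indicator {-T..T} t *\<^sub>R f t) = integral {-T..T} f" for T
  proof -
    have "set_integrable lborel {-T..T} f"
      unfolding set_integrable_def by (rule integrable_mult_indicator) (use f in auto)
    from set_borel_integral_eq_integral(2)[OF this] show ?thesis
      by (simp add: set_lebesgue_integral_def)
  qed
  ultimately show ?thesis by simp
qed



lemma Complex_eq': "Complex a b = of_real a + \<i> * of_real b"
  by (simp add: complex_eq_iff)

lemma vd_im: "((\<lambda>t. Complex \<sigma> t) has_vector_derivative \<i>) (at t)"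
proof -
  have "((\<lambda>t. of_real \<sigma> + \<i> * of_real t) has_vector_derivative \<i>) (at t)"
    by (rule derivative_eq_intros refl | simp)+
  then show ?thesis by (simp add: Complex_eq')
qed

lemma vd_re: "((\<lambda>s. Complex s T) has_vector_derivative 1) (at s)"
proof -
  have "((\<lambda>s. of_real s + \<i> * of_real T) has_vector_derivative 1) (at s)"
    by (rule derivative_eq_intros refl | simp)+
  then show ?thesis by (simp add: Complex_eq')
qed

lemma line_shift:
  fixes \<phi> :: "complex \<Rightarrow> complex" and \<delta> :: real
  assumes hol: "\<phi> holomorphic_on {z. Re z > 0}"
    and bnd: "\<And>a b. 0 < a \<Longrightarrow> \<exists>C. \<forall>z. a \<le> Re z \<and> Re z \<le> b \<longrightarrow> norm (\<phi> z) \<le> C * inverse (1 + (Im z)^2)"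
    and d: "0 < \<delta>" "\<delta> \<le> 1"
  shows "(LINT t|lborel. \<phi> (Complex 1 t)) = (LINT t|lborel. \<phi> (Complex \<delta> t))"
proof -
  define S where "S = {z. Re z > 0}"
  have oS: "open S" unfolding S_def by (simp add: open_halfspace_Re_gt)
  have cS: "convex S" unfolding S_def by (simp add: convex_halfspace_Re_gt)
  have holS: "\<phi> holomorphic_on S" unfolding S_def by (rule hol)
  obtain \<Psi> where \<Psi>: "\<And>x. x \<in> S \<Longrightarrow> (\<Psi> has_field_derivative \<phi> x) (at x within S)"
    using holomorphic_convex_primitive'[OF cS oS holS] by metis
  have \<Psi>': "(\<Psi> has_field_derivative \<phi> x) (at x)" if "x \<in> S" for x
  proof -
    have "at x within S = at x" by (rule at_within_open[OF that oS])
    then show ?thesis using \<Psi>[OF that] by (simp only:)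
  qed
  have contS: "continuous_on S \<phi>" by (rule holomorphic_on_imp_continuous_on[OF holS])
  have vert: "((\<lambda>t. \<phi> (Complex \<sigma> t) * \<i>) has_integral (\<Psi> (Complex \<sigma> T) - \<Psi> (Complex \<sigma> (-T)))) {-T..T}"
    if "\<sigma> > 0" "T \<ge> 0" for \<sigma> T
  proof (rule fundamental_theorem_of_calculus[of "-T" T "\<lambda>t. \<Psi> (Complex \<sigma> t)" "\<lambda>t. \<phi> (Complex \<sigma> t) * \<i>"])
    show "- T \<le> T" using that by simp
    fix t assume "t \<in> {-T..T}"
    have "((\<lambda>t. Complex \<sigma> t) has_vector_derivative \<i>) (at t)" by (rule vd_im)
    moreover have "(\<Psi> has_field_derivative \<phi> (Complex \<sigma> t)) (at (Complex \<sigma> t))"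
      using that by (intro \<Psi>') (simp add: S_def)
    ultimately have "((\<Psi> \<circ> (\<lambda>t. Complex \<sigma> t)) has_vector_derivative \<i> * \<phi> (Complex \<sigma> t)) (at t)"
      by (rule field_vector_diff_chain_at)
    then show "((\<lambda>t. \<Psi> (Complex \<sigma> t)) has_vector_derivative \<phi> (Complex \<sigma> t) * \<i>) (at t within {-T..T})"
      unfolding o_def mult.commute[of _ \<i>] by (rule has_vector_derivative_at_within)
  qed
  have horiz: "((\<lambda>s. \<phi> (Complex s T)) has_integral (\<Psi> (Complex 1 T) - \<Psi> (Complex \<delta> T))) {\<delta>..1}" for T
  proof (rule fundamental_theorem_of_calculus[of \<delta> 1 "\<lambda>s. \<Psi> (Complex s T)" "\<lambda>s. \<phi> (Complex s T)"])
    show "\<delta> \<le> 1" using d by simp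
    fix s assume s: "s \<in> {\<delta>..1}"
    have "((\<lambda>s. Complex s T) has_vector_derivative 1) (at s)" by (rule vd_re)
    moreover have "(\<Psi> has_field_derivative \<phi> (Complex s T)) (at (Complex s T))"
      using s d by (intro \<Psi>') (simp add: S_def)
    ultimately have "((\<Psi> \<circ> (\<lambda>s. Complex s T)) has_vector_derivative 1 * \<phi> (Complex s T)) (at s)"
      by (rule field_vector_diff_chain_at)
    then show "((\<lambda>s. \<Psi> (Complex s T)) has_vector_derivative \<phi> (Complex s T)) (at s within {\<delta>..1})"
      unfolding o_def by (simp add: has_vector_derivative_at_within)
  qed
  define H where "H T = integral {\<delta>..1} (\<lambda>s. \<phi> (Complex s T))" for T
  define I where "I \<sigma> T = integral {-T..T} (\<lambda>t. \<phi> (Complex \<sigma> t))" for \<sigma> T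
  have key: "\<i> * I 1 T - \<i> * I \<delta> T = H T - H (-T)" if "T \<ge> 0" for T
  proof -
    have "I \<sigma> T * \<i> = \<Psi> (Complex \<sigma> T) - \<Psi> (Complex \<sigma> (-T))" if "\<sigma> > 0" for \<sigma>
      using integral_unique[OF vert[OF that \<open>T \<ge> 0\<close>]] unfolding I_def
      by (simp add: integral_mult_left)
    from this[of 1] this[of \<delta>] d have
      "\<i> * I 1 T - \<i> * I \<delta> T = (\<Psi> (Complex 1 T) - \<Psi> (Complex \<delta> T)) - (\<Psi> (Complex 1 (-T)) - \<Psi> (Complex \<delta> (-T)))"
      by (simp add: algebra_simps)
    also have "\<dots> = H T - H (-T)" using horiz[of T] horiz[of "-T"] unfolding H_def
      by (simp add: integral_unique)
    finally show ?thesis .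
  qed
  obtain C where C: "\<And>z. \<delta> \<le> Re z \<and> Re z \<le> 1 \<Longrightarrow> norm (\<phi> z) \<le> C * inverse (1 + (Im z)^2)"
    using bnd[OF d(1), of 1] by blast
  have Hb: "norm (H T) \<le> (1 - \<delta>) * (C * inverse (1 + T^2))" for T
  proof -
    have "norm (H T) \<le> integral {\<delta>..1} (\<lambda>s. C * inverse (1 + T^2))"
      unfolding H_def
    proof (rule integral_norm_bound_integral)
      show "(\<lambda>s. \<phi> (Complex s T)) integrable_on {\<delta>..1}" using horiz[of T] by blast
      show "(\<lambda>s. C * inverse (1 + T^2)) integrable_on {\<delta>..1}" by (rule integrable_const_ivl)
      fix s assume "s \<in> {\<delta>..1}" then show "norm (\<phi> (Complex s T)) \<le> C * inverse (1 + T^2)"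
        using C[of "Complex s T"] by simp
    qed
    also have "\<dots> = (1 - \<delta>) * (C * inverse (1 + T^2))" using d by simp
    finally show ?thesis .
  qed
  have Hlim: "((\<lambda>T. H T - H (-T)) \<longlongrightarrow> 0) at_top"
  proof -
    have "((\<lambda>T::real. inverse (1 + T^2)) \<longlongrightarrow> 0) at_top" by real_asymp
    then have "((\<lambda>T. (1 - \<delta>) * (C * inverse (1 + T^2))) \<longlongrightarrow> 0) at_top"
      by (intro tendsto_mult_right_zero)
    then have a: "((\<lambda>T. H T) \<longlongrightarrow> 0) at_top"
      by (rule Lim_null_comparison[OF always_eventually, rotated]) (rule allI, rule Hb)
    have "((\<lambda>T. H (-T)) \<longlongrightarrow> 0) at_top"
      by (rule Lim_null_comparison[OF always_eventually, rotated, OF \<open>((\<lambda>T. (1 - \<delta>) * (C * inverse (1 + T^2))) \<longlongrightarrow> 0) at_top\<close>])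
         (rule allI, rule order.trans[OF Hb], simp)
    from tendsto_diff[OF a this] show ?thesis by simp
  qed
  have integ: "integrable lborel (\<lambda>t. \<phi> (Complex \<sigma> t))" if sg: "\<sigma> > 0" for \<sigma>
  proof -
    obtain C' where C': "\<And>z. \<sigma> \<le> Re z \<and> Re z \<le> \<sigma> \<Longrightarrow> norm (\<phi> z) \<le> C' * inverse (1 + (Im z)^2)"
      using bnd[OF sg, of \<sigma>] by blast
    have "continuous_on UNIV (\<lambda>t. \<phi> (Complex \<sigma> t))"
    proof (rule continuous_on_compose2[OF contS])
      show "continuous_on UNIV (\<lambda>t. Complex \<sigma> t)" unfolding Complex_eq' by (intro continuous_intros)
      show "(\<lambda>t. Complex \<sigma> t) ` UNIV \<subseteq> S" using sg by (auto simp: S_def)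
    qed
    then have m: "(\<lambda>t. \<phi> (Complex \<sigma> t)) \<in> borel_measurable lborel"
      by (simp add: borel_measurable_continuous_onI)
    show ?thesis
    proof (rule Bochner_Integration.integrable_bound[OF _ m])
      show "integrable lborel (\<lambda>t. C' * inverse (1 + t^2))" using integrable_inv1sq by simp
      show "AE t in lborel. norm (\<phi> (Complex \<sigma> t)) \<le> norm (C' * inverse (1 + t^2))"
      proof (rule AE_I2)
        fix t :: real
        have "norm (\<phi> (Complex \<sigma> t)) \<le> C' * inverse (1 + t^2)" using C'[of "Complex \<sigma> t"] by simp
        also have "\<dots> \<le> norm (C' * inverse (1 + t^2))" by (simp only: real_norm_def abs_ge_self)
        finally show "norm (\<phi> (Complex \<sigma> t)) \<le> norm (C' * inverse (1 + t^2))" .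
      qed
    qed
  qed
  have L1: "((\<lambda>T. I 1 T) \<longlongrightarrow> (LINT t|lborel. \<phi> (Complex 1 t))) at_top"
    unfolding I_def by (rule integral_sym_tendsto[OF integ]) simp
  have L2: "((\<lambda>T. I \<delta> T) \<longlongrightarrow> (LINT t|lborel. \<phi> (Complex \<delta> t))) at_top"
    unfolding I_def by (rule integral_sym_tendsto[OF integ]) (use d in simp)
  have "((\<lambda>T. \<i> * I 1 T - \<i> * I \<delta> T) \<longlongrightarrow> \<i> * (LINT t|lborel. \<phi> (Complex 1 t)) - \<i> * (LINT t|lborel. \<phi> (Complex \<delta> t))) at_top"
    by (intro tendsto_intros L1 L2)
  moreover have lim0: "((\<lambda>T. \<i> * I 1 T - \<i> * I \<delta> T) \<longlongrightarrow> 0) at_top"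
    using Hlim by (rule Lim_transform_eventually) (use eventually_ge_at_top[of 0] in \<open>rule eventually_mono, use key in simp\<close>)
  ultimately have "\<i> * (LINT t|lborel. \<phi> (Complex 1 t)) - \<i> * (LINT t|lborel. \<phi> (Complex \<delta> t)) = 0"
    using tendsto_unique[OF trivial_limit_at_top_linorder] by blast
  then show ?thesis by (simp add: right_diff_distrib[symmetric])
qed



lemma line_integrable:
  fixes \<phi> :: "complex \<Rightarrow> complex"
  assumes hol: "\<phi> holomorphic_on {z. Re z > 0}"
    and bnd: "\<And>a b. 0 < a \<Longrightarrow> \<exists>C. \<forall>z. a \<le> Re z \<and> Re z \<le> b \<longrightarrow> norm (\<phi> z) \<le> C * inverse (1 + (Im z)^2)"
    and sg: "\<sigma> > 0"
  shows "integrable lborel (\<lambda>t. \<phi> (Complex \<sigma> t))"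
proof -
  have contS: "continuous_on {z. Re z > 0} \<phi>" by (rule holomorphic_on_imp_continuous_on[OF hol])
  obtain C' where C': "\<And>z. \<sigma> \<le> Re z \<and> Re z \<le> \<sigma> \<Longrightarrow> norm (\<phi> z) \<le> C' * inverse (1 + (Im z)^2)"
    using bnd[OF sg, of \<sigma>] by blast
  have "continuous_on UNIV (\<lambda>t. \<phi> (Complex \<sigma> t))"
  proof (rule continuous_on_compose2[OF contS])
    show "continuous_on UNIV (\<lambda>t. Complex \<sigma> t)" unfolding Complex_eq' by (intro continuous_intros)
    show "(\<lambda>t. Complex \<sigma> t) ` UNIV \<subseteq> {z. Re z > 0}" using sg by auto
  qed
  then have m: "(\<lambda>t. \<phi> (Complex \<sigma> t)) \<in> borel_measurable lborel"
    by (simp add: borel_measurable_continuous_onI)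
  show ?thesis
  proof (rule Bochner_Integration.integrable_bound[OF _ m])
    show "integrable lborel (\<lambda>t. C' * inverse (1 + t^2))" using integrable_inv1sq by simp
    show "AE t in lborel. norm (\<phi> (Complex \<sigma> t)) \<le> norm (C' * inverse (1 + t^2))"
    proof (rule AE_I2)
      fix t :: real
      have "norm (\<phi> (Complex \<sigma> t)) \<le> C' * inverse (1 + t^2)" using C'[of "Complex \<sigma> t"] by simp
      also have "\<dots> \<le> norm (C' * inverse (1 + t^2))" by (simp only: real_norm_def abs_ge_self)
      finally show "norm (\<phi> (Complex \<sigma> t)) \<le> norm (C' * inverse (1 + t^2))" .
    qed
  qed
qed

lemma V_bound_gen:
  fixes h :: "complex \<Rightarrow> complex" and \<delta> :: real
  assumes hol: "h holomorphic_on {z. Re z > 0}"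
    and bnd: "\<And>a b. 0 < a \<Longrightarrow> \<exists>C. \<forall>z. a \<le> Re z \<and> Re z \<le> b \<longrightarrow> norm (h z) \<le> C * inverse (1 + (Im z)^2)"
    and d: "0 < \<delta>" "\<delta> \<le> 1"
  shows "\<exists>K\<ge>0. \<forall>x>0. norm (vert_int1 (\<lambda>u. h u * complex_of_real x powr (- u))) \<le> K * x powr (- \<delta>)"
proof -
  define K where "K = (LINT t|lborel. norm (h (Complex \<delta> t))) / (2 * pi)"
  have K0: "K \<ge> 0" unfolding K_def by (intro divide_nonneg_pos integral_nonneg) auto
  have "norm (vert_int1 (\<lambda>u. h u * complex_of_real x powr (- u))) \<le> K * x powr (- \<delta>)" if x: "x > 0" for x
  proof -
    define \<phi> where "\<phi> u = h u * complex_of_real x powr (- u)" for u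
    have nxp: "norm (complex_of_real x powr (- u)) = x powr (- Re u)" for u
      using x by (simp add: norm_powr_real_powr)
    have holp: "\<phi> holomorphic_on {z. Re z > 0}"
      unfolding \<phi>_def by (intro holomorphic_intros hol)
    have bndp: "\<exists>C. \<forall>z. a \<le> Re z \<and> Re z \<le> b \<longrightarrow> norm (\<phi> z) \<le> C * inverse (1 + (Im z)^2)"
      if a: "0 < a" for a b
    proof -
      obtain C where C: "\<And>z. a \<le> Re z \<and> Re z \<le> b \<Longrightarrow> norm (h z) \<le> C * inverse (1 + (Im z)^2)"
        using bnd[OF a, of b] by blast
      show ?thesis
      proof (intro exI allI impI)
        fix z assume z: "a \<le> Re z \<and> Re z \<le> b"
        have C0: "C * inverse (1 + (Im z)^2) \<ge> 0" using C[OF z] norm_ge_zero order.trans by blast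
        have xp: "x powr (- Re z) \<le> x powr (- a) + x powr (- b)"
        proof (cases "x \<ge> 1")
          case True
          then have "x powr (- Re z) \<le> x powr (- a)" using z by (intro powr_mono) auto
          then show ?thesis by (simp add: add_increasing2)
        next
          case False
          then have "x powr (- Re z) \<le> x powr (- b)" using z x by (intro powr_mono') auto
          then show ?thesis by (simp add: add_increasing)
        qed
        have "norm (\<phi> z) = norm (h z) * x powr (- Re z)" unfolding \<phi>_def by (simp add: norm_mult nxp)
        also have "\<dots> \<le> (C * inverse (1 + (Im z)^2)) * (x powr (- a) + x powr (- b))"
          using C0 by (intro mult_mono C z xp) auto
        also have "\<dots> = (C * (x powr (- a) + x powr (- b))) * inverse (1 + (Im z)^2)" by simp
        finally show "norm (\<phi> z) \<le> (C * (x powr (- a) + x powr (- b))) * inverse (1 + (Im z)^2)" .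
      qed
    qed
    have eq: "(LINT t|lborel. \<phi> (Complex 1 t)) = (LINT t|lborel. \<phi> (Complex \<delta> t))"
      by (rule line_shift[OF holp bndp d]) auto
    have "vert_int1 (\<lambda>u. h u * complex_of_real x powr (- u)) = (LINT t|lborel. \<phi> (Complex \<delta> t)) / complex_of_real (2 * pi)"
      unfolding vert_int1_def \<phi>_def[symmetric] eq ..
    then have "norm (vert_int1 (\<lambda>u. h u * complex_of_real x powr (- u))) = norm (LINT t|lborel. \<phi> (Complex \<delta> t)) / (2 * pi)"
      by (simp add: norm_divide)
    also have "\<dots> \<le> (LINT t|lborel. norm (\<phi> (Complex \<delta> t))) / (2 * pi)"
      by (intro divide_right_mono integral_norm_bound) auto
    also have "(LINT t|lborel. norm (\<phi> (Complex \<delta> t))) = (LINT t|lborel. norm (h (Complex \<delta> t)) * x powr (- \<delta>))"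
      unfolding \<phi>_def by (simp add: norm_mult nxp)
    also have "\<dots> = (LINT t|lborel. norm (h (Complex \<delta> t))) * x powr (- \<delta>)" by simp
    finally show ?thesis unfolding K_def by simp
  qed
  with K0 show ?thesis by blast
qed



lemma nonpos_Ints_Re_pos: "Re (z::complex) > 0 \<Longrightarrow> z \<notin> \<int>\<^sub>\<le>\<^sub>0"
  by (auto elim!: nonpos_Ints_cases)

lemma gamma_fac_bound:
  assumes c: "c > 1/2"
  shows "\<exists>M. \<forall>s. c \<le> Re s \<and> Re s \<le> d \<longrightarrow> norm (gamma_fac s \<kappa>) \<le> M"
proof -
  obtain M1 where M1: "\<And>z. (c - 1/2)/2 \<le> Re z \<and> Re z \<le> (d + real \<kappa> + 1)/2 \<Longrightarrow> norm (Gamma z) \<le> M1"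
    using Gamma_bounded_strip[of "(c - 1/2)/2" "(d + real \<kappa> + 1)/2"] c by auto
  show ?thesis
  proof (intro exI allI impI)
    fix s assume s: "c \<le> Re s \<and> Re s \<le> d"
    have M10: "0 \<le> M1" using M1[of "Complex ((c - 1/2)/2) 0"] s c by (auto intro: order.trans[OF norm_ge_zero])
    have p: "norm (complex_of_real pi powr (- s)) \<le> 1"
    proof -
      have "norm (complex_of_real pi powr (- s)) = pi powr (- Re s)"
        by (simp add: norm_powr_real_powr)
      also have "\<dots> \<le> pi powr 0" using s c pi_gt3 by (intro powr_mono) auto
      finally show ?thesis by simp
    qed
    have g1: "norm (Gamma ((s + (of_nat \<kappa> - 1) / 2) / 2)) \<le> M1"
      using s c by (intro M1) (auto simp: field_simps)
    have g2: "norm (Gamma ((s + (of_nat \<kappa> + 1) / 2) / 2)) \<le> M1"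
      using s c by (intro M1) (auto simp: field_simps)
    have "norm (gamma_fac s \<kappa>) \<le> 1 * M1 * M1"
      unfolding gamma_fac_def norm_mult
      using M10 by (intro mult_mono p g1 g2 M10) auto
    then show "norm (gamma_fac s \<kappa>) \<le> M1 * M1" by simp
  qed
qed

lemma admissible_strip_bound:
  assumes "admissible_G G"
  shows "\<exists>C. \<forall>z. a \<le> Re z \<and> Re z \<le> b \<longrightarrow> norm (G z) \<le> C * inverse (1 + (Im z)^2)"
proof -
  obtain C where C: "\<And>z. a \<le> Re z \<and> Re z \<le> b \<Longrightarrow> norm (G z) \<le> C * (1 + \<bar>Im z\<bar>) powr (- 2)"
    using assms unfolding admissible_G_def by blast
  show ?thesis
  proof (intro exI allI impI)
    fix z assume z: "a \<le> Re z \<and> Re z \<le> b"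
    have C0: "C \<ge> 0"
    proof -
      have "0 \<le> C * (1 + \<bar>Im z\<bar>) powr (- 2)" using C[OF z] norm_ge_zero order.trans by blast
      moreover have "(1 + \<bar>Im z\<bar>) powr (- 2) > 0" by simp
      ultimately show ?thesis by (simp add: zero_le_mult_iff)
    qed
    have "(1 + \<bar>Im z\<bar>) powr (- 2) = inverse ((1 + \<bar>Im z\<bar>)^2)"
      by (simp add: powr_minus powr_realpow)
    also have "\<dots> \<le> inverse (1 + (Im z)^2)"
      by (intro le_imp_inverse_le) (auto simp: power2_eq_square algebra_simps add_pos_nonneg)
    finally have "C * (1 + \<bar>Im z\<bar>) powr (- 2) \<le> C * inverse (1 + (Im z)^2)"
      using C0 by (intro mult_left_mono) auto
    with C[OF z] show "norm (G z) \<le> C * inverse (1 + (Im z)^2)" by linarith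
  qed
qed

definition hfun :: "(complex \<Rightarrow> complex) \<Rightarrow> nat \<Rightarrow> nat \<Rightarrow> complex \<Rightarrow> complex" where
  "hfun G \<kappa> k u = G u / u * (gamma_fac (1/2 + u) \<kappa> ^ k / gamma_fac (1/2) \<kappa> ^ k)"

lemma hfun_hol:
  assumes "admissible_G G"
  shows "hfun G \<kappa> k holomorphic_on {z. Re z > 0}"
proof -
  define S where "S = {z::complex. Re z > 0}"
  have G: "G holomorphic_on S"
    using assms unfolding admissible_G_def by (auto intro: holomorphic_on_subset)
  have lin: "(\<lambda>u. (1/2 + u + c) / 2) holomorphic_on S" for c :: complex
    by (intro holomorphic_on_divide holomorphic_on_add holomorphic_on_const holomorphic_on_ident) auto
  have nz: "(1/2 + u + (of_nat \<kappa> + complex_of_real e) / 2) / 2 \<notin> \<int>\<^sub>\<le>\<^sub>0" if "u \<in> S" "e \<ge> -1" for u e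
  proof (rule nonpos_Ints_Re_pos)
    show "Re ((1/2 + u + (of_nat \<kappa> + complex_of_real e) / 2) / 2) > 0"
      using that unfolding S_def by (simp add: field_simps)
  qed
  have g1: "(\<lambda>u. Gamma ((1/2 + u + (of_nat \<kappa> - 1) / 2) / 2)) holomorphic_on S"
    by (rule holomorphic_Gamma'[OF lin]) (use nz[of _ "-1"] in simp)
  have g2: "(\<lambda>u. Gamma ((1/2 + u + (of_nat \<kappa> + 1) / 2) / 2)) holomorphic_on S"
    by (rule holomorphic_Gamma'[OF lin]) (use nz[of _ "1"] in simp)
  have p: "(\<lambda>u. complex_of_real pi powr (- (1/2 + u))) holomorphic_on S"
    by (intro holomorphic_on_powr_right holomorphic_on_minus holomorphic_on_add holomorphic_on_const holomorphic_on_ident)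
  have g: "(\<lambda>u. gamma_fac (1/2 + u) \<kappa>) holomorphic_on S"
    unfolding gamma_fac_def by (intro holomorphic_on_mult p g1 g2)
  have "(\<lambda>u. G u / u * (gamma_fac (1/2 + u) \<kappa> ^ k * inverse (gamma_fac (1/2) \<kappa> ^ k))) holomorphic_on S"
    by (intro holomorphic_on_mult holomorphic_on_divide G holomorphic_on_ident holomorphic_on_power g holomorphic_on_const)
       (auto simp: S_def)
  then show ?thesis unfolding hfun_def S_def[symmetric] divide_inverse[of "gamma_fac (1/2 + _) \<kappa> ^ k"] .
qed

lemma hfun_bound:
  assumes "admissible_G G" and a: "0 < a"
  shows "\<exists>C. \<forall>z. a \<le> Re z \<and> Re z \<le> b \<longrightarrow> norm (hfun G \<kappa> k z) \<le> C * inverse (1 + (Im z)^2)"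
proof -
  obtain C where C: "\<And>z. a \<le> Re z \<and> Re z \<le> b \<Longrightarrow> norm (G z) \<le> C * inverse (1 + (Im z)^2)"
    using admissible_strip_bound[OF assms(1)] by blast
  obtain M where M: "\<And>s. 1/2 + a \<le> Re s \<and> Re s \<le> 1/2 + b \<Longrightarrow> norm (gamma_fac s \<kappa>) \<le> M"
    using gamma_fac_bound[of "1/2 + a" "1/2 + b" \<kappa>] a by auto
  define g0 where "g0 = norm (gamma_fac (1/2) \<kappa>) ^ k"
  have g00: "g0 \<ge> 0" unfolding g0_def by simp
  show ?thesis
  proof (intro exI allI impI)
    fix z assume z: "a \<le> Re z \<and> Re z \<le> b"
    have CI: "0 \<le> C * inverse (1 + (Im z)^2)" using C[OF z] norm_ge_zero order.trans by blast
    have Mz: "norm (gamma_fac (1/2 + z) \<kappa>) \<le> M" by (rule M) (use z in simp)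
    have M0: "0 \<le> M" using Mz norm_ge_zero order.trans by blast
    have u: "inverse (norm z) \<le> inverse a"
    proof -
      have "a \<le> norm z" using z complex_Re_le_cmod[of z] by linarith
      then show ?thesis using a by (intro le_imp_inverse_le) auto
    qed
    have gk: "norm (gamma_fac (1/2 + z) \<kappa> ^ k) \<le> M ^ k"
      unfolding norm_power by (intro power_mono Mz norm_ge_zero)
    have e: "norm (hfun G \<kappa> k z) = norm (G z) * inverse (norm z) * (norm (gamma_fac (1/2 + z) \<kappa> ^ k) / g0)"
      unfolding hfun_def g0_def norm_mult norm_divide norm_power divide_inverse by (simp add: norm_inverse norm_power)
    have s1: "norm (G z) * inverse (norm z) \<le> (C * inverse (1 + (Im z)^2)) * inverse a"
      by (rule mult_mono[OF C[OF z] u]) (use CI in auto)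
    have s2: "norm (gamma_fac (1/2 + z) \<kappa> ^ k) / g0 \<le> M ^ k / g0"
      by (rule divide_right_mono[OF gk g00])
    have "norm (hfun G \<kappa> k z) \<le> (C * inverse (1 + (Im z)^2)) * inverse a * (M ^ k / g0)"
      unfolding e by (rule mult_mono[OF s1 s2]) (use CI a M0 g00 in auto)
    also have "\<dots> = (C * inverse a * (M ^ k / g0)) * inverse (1 + (Im z)^2)" by simp
    finally show "norm (hfun G \<kappa> k z) \<le> (C * inverse a * (M ^ k / g0)) * inverse (1 + (Im z)^2)" .
  qed
qed

lemma V1_bound:
  assumes "admissible_G G" "0 < \<delta>" "\<delta> \<le> 1"
  shows "\<exists>K\<ge>0. \<forall>x>0. norm (V1 G \<kappa> x) \<le> K * x powr (- \<delta>)"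
proof -
  have "V1 G \<kappa> x = vert_int1 (\<lambda>u. hfun G \<kappa> 1 u * complex_of_real x powr (- u))" for x
    unfolding V1_def hfun_def by simp
  then show ?thesis
    using V_bound_gen[OF hfun_hol[OF assms(1)] hfun_bound[OF assms(1)] assms(2,3)] by simp
qed

lemma V2_bound:
  assumes "admissible_G G" "0 < \<delta>" "\<delta> \<le> 1"
  shows "\<exists>K\<ge>0. \<forall>x>0. norm (V2 G \<kappa> x) \<le> K * x powr (- \<delta>)"
proof -
  have "V2 G \<kappa> x = vert_int1 (\<lambda>u. hfun G \<kappa> 2 u * complex_of_real x powr (- u))" for x
    unfolding V2_def hfun_def by simp
  then show ?thesis
    using V_bound_gen[OF hfun_hol[OF assms(1)] hfun_bound[OF assms(1)] assms(2,3)] by simp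
qed



lemma norm_infsum_le_fin:
  fixes f :: "'a \<Rightarrow> complex"
  assumes B: "\<And>F. finite F \<Longrightarrow> F \<subseteq> A \<Longrightarrow> (\<Sum>x\<in>F. norm (f x)) \<le> B"
  shows "norm (infsum f A) \<le> B"
proof (cases "f summable_on A")
  case True
  then have abs: "(\<lambda>x. norm (f x)) summable_on A" using summable_on_iff_abs_summable_on_complex by blast
  have "norm (infsum f A) \<le> infsum (\<lambda>x. norm (f x)) A" by (rule norm_infsum_bound[OF abs])
  also have "\<dots> \<le> B" by (rule infsum_le_finite_sums[OF abs B])
  finally show ?thesis .
next
  case False
  then have "infsum f A = 0" by (rule infsum_not_exists)
  moreover have "0 \<le> B" using B[of "{}"] by simp
  ultimately show ?thesis by simp
qed

lemma zeta_partial_bound: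
  fixes s :: real assumes s: "s > 1"
  shows "\<exists>Z. \<forall>F. finite F \<longrightarrow> (\<Sum>k\<in>F. real k powr (- s)) \<le> Z"
proof -
  have sm: "summable (\<lambda>k. real k powr (- s))" using s by (subst summable_real_powr_iff) simp
  show ?thesis
  proof (intro exI allI impI)
    fix F :: "nat set" assume "finite F"
    then show "(\<Sum>k\<in>F. real k powr (- s)) \<le> (\<Sum>k. real k powr (- s))"
      by (intro sum_le_suminf[OF sm]) auto
  qed
qed

lemma cube_sum:
  fixes f :: "nat \<Rightarrow> real"
  shows "(\<Sum>(a,b,c)\<in>A\<times>A\<times>A. f a * f b * f c) = (\<Sum>a\<in>A. f a) ^ 3"
proof -
  have "(\<Sum>(a,b,c)\<in>A\<times>A\<times>A. f a * f b * f c) = (\<Sum>a\<in>A. \<Sum>(b,c)\<in>A\<times>A. f a * f b * f c)"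
    by (subst sum.cartesian_product[symmetric]) (simp add: case_prod_beta)
  also have "\<dots> = (\<Sum>a\<in>A. \<Sum>b\<in>A. \<Sum>c\<in>A. f a * f b * f c)"
    by (subst sum.cartesian_product[symmetric]) (simp add: case_prod_beta)
  also have "\<dots> = (\<Sum>a\<in>A. f a * (\<Sum>b\<in>A. f b * (\<Sum>c\<in>A. f c)))"
    by (simp add: sum_distrib_left mult.assoc)
  also have "\<dots> = (\<Sum>a\<in>A. f a) * ((\<Sum>b\<in>A. f b) * (\<Sum>c\<in>A. f c))"
    by (simp only: sum_distrib_right)
  also have "\<dots> = (\<Sum>a\<in>A. f a) ^ 3" by (simp add: power3_eq_cube)
  finally show ?thesis .
qed

lemma sq_sum:
  fixes f :: "nat \<Rightarrow> real"
  shows "(\<Sum>(a,b)\<in>A\<times>A. f a * f b) = (\<Sum>a\<in>A. f a) ^ 2"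
proof -
  have "(\<Sum>(a,b)\<in>A\<times>A. f a * f b) = (\<Sum>a\<in>A. \<Sum>b\<in>A. f a * f b)"
    by (subst sum.cartesian_product[symmetric]) (simp add: case_prod_beta)
  also have "\<dots> = (\<Sum>a\<in>A. f a * (\<Sum>b\<in>A. f b))" by (simp add: sum_distrib_left)
  also have "\<dots> = (\<Sum>a\<in>A. f a) * (\<Sum>b\<in>A. f b)" by (simp only: sum_distrib_right)
  finally show ?thesis by (simp add: power2_eq_square)
qed

lemma divisor_count_mult:
  fixes a b :: nat assumes "a > 0" "b > 0"
  shows "divisor_count (a * b) \<le> divisor_count a * divisor_count b"
proof -
  let ?D = "\<lambda>n::nat. {d. d dvd n \<and> d > 0}"
  have fin: "finite (?D n)" if "n > 0" for n using that by simp
  have "?D (a * b) \<subseteq> (\<lambda>(x,y). x * y) ` (?D a \<times> ?D b)"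
  proof
    fix d assume "d \<in> ?D (a * b)"
    then obtain x y where "d = x * y" "x dvd a" "y dvd b" using division_decomp by blast
    with assms show "d \<in> (\<lambda>(x,y). x * y) ` (?D a \<times> ?D b)"
      by (auto intro!: image_eqI[of _ _ "(x,y)"] dest: dvd_imp_le intro: Nat.gr0I)
  qed
  then have "card (?D (a * b)) \<le> card ((\<lambda>(x,y). x * y) ` (?D a \<times> ?D b))"
    by (rule card_mono[rotated]) (use assms fin in auto)
  also have "\<dots> \<le> card (?D a \<times> ?D b)" by (rule card_image_le) (use assms fin in auto)
  also have "\<dots> = card (?D a) * card (?D b)" by (rule card_cartesian_product)
  finally show ?thesis unfolding divisor_count_def by (simp flip: of_nat_mult)
qed



definition T3 :: "nat \<Rightarrow> (nat \<times> nat \<times> nat) set" where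
  "T3 n = {(n1, n2, n3). n1 * n2 * n3 = n}"

lemma T3_sub: "n > 0 \<Longrightarrow> T3 n \<subseteq> {1..n} \<times> {1..n} \<times> {1..n}"
  unfolding T3_def
  by (auto intro: dvd_imp_le simp: mult.assoc)

lemma T3_finite: "n > 0 \<Longrightarrow> finite (T3 n)"
  using T3_sub finite_subset by blast

lemma divisor_count_nonneg: "divisor_count n \<ge> 0"
  unfolding divisor_count_def by simp

lemma powr_mult_nat: "real (a * b) powr s = real a powr s * real b powr s"
  by (simp add: powr_mult)

lemma dc_sum_bound:
  fixes s :: real assumes s: "s > 1"
  shows "\<exists>Z. \<forall>F. finite F \<longrightarrow> 0 \<notin> F \<longrightarrow> (\<Sum>k\<in>F. divisor_count k * real k powr (- s)) \<le> Z"
proof -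
  obtain Z0 where Z0: "\<And>F. finite F \<Longrightarrow> (\<Sum>k\<in>F. real k powr (- s)) \<le> Z0"
    using zeta_partial_bound[OF s] by blast
  have Z00: "0 \<le> Z0" using Z0[of "{}"] by simp
  let ?D = "\<lambda>n::nat. {d. d dvd n \<and> d > 0}"
  let ?p = "\<lambda>k::nat. real k powr (- s)"
  show ?thesis
  proof (intro exI allI impI)
    fix F :: "nat set" assume F: "finite F" "0 \<notin> F"
    define N where "N = Max (insert 0 F)"
    have kN: "k \<le> N" if "k \<in> F" for k using F that unfolding N_def by simp
    have finD: "finite (?D k)" if "k \<in> F" for k
    proof (rule finite_subset[of _ "{d. d dvd k}"])
      show "finite {d. d dvd k}" using F that by (intro finite_divisors_nat) (auto intro: Nat.gr0I)
    qed auto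
    have "(\<Sum>k\<in>F. divisor_count k * ?p k) = (\<Sum>k\<in>F. \<Sum>d\<in>?D k. ?p k)"
      unfolding divisor_count_def by simp
    also have "\<dots> = (\<Sum>(k,d)\<in>Sigma F ?D. ?p k)"
      by (rule sum.Sigma) (use F finD in auto)
    also have "\<dots> = (\<Sum>(k,d)\<in>Sigma F ?D. ?p d * ?p (k div d))"
    proof (rule sum.cong[OF refl], clarify)
      fix k d assume "k \<in> F" "d dvd k" "0 < d"
      then have "k = d * (k div d)" by simp
      then have "?p k = ?p (d * (k div d))" by simp
      then show "?p k = ?p d * ?p (k div d)" by (simp only: powr_mult_nat)
    qed
    also have "\<dots> = (\<Sum>(x,y)\<in>(\<lambda>(k,d). (d, k div d)) ` Sigma F ?D. ?p x * ?p y)"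
    proof (subst sum.reindex)
      show "inj_on (\<lambda>(k,d). (d, k div d)) (Sigma F ?D)"
        by (auto simp: inj_on_def)
    qed (simp add: case_prod_beta o_def)
    also have "\<dots> \<le> (\<Sum>(x,y)\<in>{1..N}\<times>{1..N}. ?p x * ?p y)"
    proof (rule sum_mono2)
      show "(\<lambda>(k,d). (d, k div d)) ` Sigma F ?D \<subseteq> {1..N}\<times>{1..N}"
      proof
        fix t assume "t \<in> (\<lambda>(k,d). (d, k div d)) ` Sigma F ?D"
        then obtain k d where k: "k \<in> F" and d: "d dvd k" "0 < d" and teq: "t = (d, k div d)" by auto
        have k0: "k > 0" using k F by (auto intro: Nat.gr0I)
        have "d \<le> k" using d k0 by (simp add: dvd_imp_le)
        moreover have "k div d \<le> N" using kN[OF k] div_le_dividend le_trans by blast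
        moreover have "k div d \<ge> 1" using d k0 by (metis dvd_div_eq_0_iff less_one not_le neq0_conv)
        ultimately show "t \<in> {1..N}\<times>{1..N}" using kN[OF k] d teq by auto
      qed
    qed auto
    also have "\<dots> = (\<Sum>x\<in>{1..N}. ?p x) ^ 2" by (rule sq_sum)
    also have "\<dots> \<le> Z0 ^ 2" by (intro power_mono Z0) (auto intro: sum_nonneg)
    finally show "(\<Sum>k\<in>F. divisor_count k * ?p k) \<le> Z0 ^ 2" .
  qed
qed

lemma dc3_sum_bound:
  fixes s :: real assumes s: "s > 1"
  shows "\<exists>S. \<forall>F. finite F \<longrightarrow> 0 \<notin> F \<longrightarrow>
     (\<Sum>n\<in>F. divisor_count n * real (card (T3 n)) * real n powr (- s)) \<le> S"
proof -
  obtain Z where Z: "\<And>F. finite F \<Longrightarrow> 0 \<notin> F \<Longrightarrow> (\<Sum>k\<in>F. divisor_count k * real k powr (- s)) \<le> Z"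
    using dc_sum_bound[OF s] by blast
  let ?p = "\<lambda>k::nat. real k powr (- s)"
  let ?g = "\<lambda>k::nat. divisor_count k * real k powr (- s)"
  show ?thesis
  proof (intro exI allI impI)
    fix F :: "nat set" assume F: "finite F" "0 \<notin> F"
    define N where "N = Max (insert 0 F)"
    have kN: "k \<le> N" if "k \<in> F" for k using F that unfolding N_def by simp
    have pos: "k > 0" if "k \<in> F" for k using F that by (auto intro: Nat.gr0I)
    have "(\<Sum>n\<in>F. divisor_count n * real (card (T3 n)) * ?p n) = (\<Sum>n\<in>F. \<Sum>t\<in>T3 n. divisor_count n * ?p n)"
      by (simp add: mult.commute mult.left_commute)
    also have "\<dots> = (\<Sum>(n,t)\<in>Sigma F T3. divisor_count n * ?p n)"
      by (rule sum.Sigma) (use F T3_finite pos in auto)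
    also have "\<dots> = (\<Sum>(n,t)\<in>Sigma F T3. (\<lambda>(a,b,c). ?g (a*b*c)) t)"
      by (rule sum.cong[OF refl]) (auto simp: T3_def)
    also have "\<dots> = (\<Sum>t\<in>snd ` Sigma F T3. (\<lambda>(a,b,c). ?g (a*b*c)) t)"
    proof (subst sum.reindex)
      show "inj_on snd (Sigma F T3)" by (auto simp: inj_on_def T3_def)
    qed (simp add: case_prod_beta o_def)
    also have "\<dots> \<le> (\<Sum>t\<in>snd ` Sigma F T3. (\<lambda>(a,b,c). ?g a * ?g b * ?g c) t)"
    proof (rule sum_mono)
      fix t assume "t \<in> snd ` Sigma F T3"
      then obtain n a b c where n: "n \<in> F" and t: "(a, b, c) \<in> T3 n" and teq: "t = (a,b,c)" by auto
      have abc: "a > 0" "b > 0" "c > 0" using t pos[OF n] by (auto simp: T3_def)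
      have "divisor_count (a*b*c) \<le> divisor_count (a*b) * divisor_count c"
        using abc by (intro divisor_count_mult) auto
      also have "\<dots> \<le> (divisor_count a * divisor_count b) * divisor_count c"
        using abc by (intro mult_right_mono divisor_count_mult divisor_count_nonneg) auto
      finally have "divisor_count (a*b*c) * ?p (a*b*c) \<le> (divisor_count a * divisor_count b * divisor_count c) * ?p (a*b*c)"
        by (rule mult_right_mono) simp
      also have "\<dots> = ?g a * ?g b * ?g c" by (simp add: powr_mult mult_ac)
      finally show "(\<lambda>(a,b,c). ?g (a*b*c)) t \<le> (\<lambda>(a,b,c). ?g a * ?g b * ?g c) t" unfolding teq by simp
    qed
    also have "\<dots> \<le> (\<Sum>t\<in>{1..N}\<times>{1..N}\<times>{1..N}. (\<lambda>(a,b,c). ?g a * ?g b * ?g c) t)"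
    proof (rule sum_mono2)
      show "snd ` Sigma F T3 \<subseteq> {1..N}\<times>{1..N}\<times>{1..N}"
      proof
        fix t assume "t \<in> snd ` Sigma F T3"
        then obtain n a b c where n: "n \<in> F" and t: "(a, b, c) \<in> T3 n" and teq: "t = (a,b,c)" by auto
        have "(a,b,c) \<in> {1..n}\<times>{1..n}\<times>{1..n}" using T3_sub[OF pos[OF n]] t by blast
        then show "t \<in> {1..N}\<times>{1..N}\<times>{1..N}" using kN[OF n] teq by auto
      qed
    qed (auto intro!: mult_nonneg_nonneg divisor_count_nonneg)
    also have "\<dots> = (\<Sum>k\<in>{1..N}. ?g k) ^ 3" by (rule cube_sum)
    also have "\<dots> \<le> Z ^ 3" by (intro power_mono Z) (auto intro!: sum_nonneg mult_nonneg_nonneg divisor_count_nonneg)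
    finally show "(\<Sum>n\<in>F. divisor_count n * real (card (T3 n)) * ?p n) \<le> Z ^ 3" .
  qed
qed



lemma w_eq: "(x::real) > 0 \<Longrightarrow> x powr (- d) * x powr (- d) / x = x powr (- (1 + 2 * d))"
proof -
  assume x: "x > 0"
  have "x powr (- d) * x powr (- d) = x powr (- d + - d)" by (rule powr_add[symmetric])
  then have "x powr (- d) * x powr (- d) / x = x powr (- d + - d) / x powr 1" using x by simp
  also have "\<dots> = x powr (- d + - d - 1)" using x by (simp add: powr_diff)
  also have "- d + - d - 1 = - (1 + 2 * d)" by simp
  finally show ?thesis .
qed

lemma Vterm_eq:
  assumes e: "e \<ge> (1::nat)" and y: "y > 0"
  shows "(real e ^ 2 * y) powr (- d) / real e = y powr (- d) * real e powr (- (1 + 2 * d))"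
proof -
  have ep: "real e > 0" using e by simp
  have "(real e ^ 2 * y) powr (- d) = real e powr (- d) * real e powr (- d) * y powr (- d)"
    using ep y by (simp add: powr_mult power2_eq_square)
  then have "(real e ^ 2 * y) powr (- d) / real e = y powr (- d) * (real e powr (- d) * real e powr (- d) / real e)"
    by simp
  also have "\<dots> = y powr (- d) * real e powr (- (1 + 2 * d))" using w_eq[OF ep] by simp
  finally show ?thesis .
qed

lemma Vsum_bound:
  assumes K2: "K2 \<ge> 0" "\<And>x. x > 0 \<Longrightarrow> norm (V2 G2 \<kappa> x) \<le> K2 * x powr (- \<delta>)"
    and Zd: "\<And>F. finite F \<Longrightarrow> (\<Sum>k\<in>F. real k powr (- (1 + 2 * \<delta>))) \<le> Zd"
    and y: "y > 0"
  shows "norm (Vsum G2 \<kappa> q y) \<le> K2 * Zd * y powr (- \<delta>)"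
  unfolding Vsum_def
proof (rule norm_infsum_le_fin)
  fix F assume F: "finite F" "F \<subseteq> {e::nat. e \<ge> 1 \<and> coprime e q}"
  have "(\<Sum>e\<in>F. norm (V2 G2 \<kappa> (real e ^ 2 * y) / of_nat e)) \<le> (\<Sum>e\<in>F. K2 * y powr (- \<delta>) * real e powr (- (1 + 2 * \<delta>)))"
  proof (rule sum_mono)
    fix e assume "e \<in> F"
    then have e: "e \<ge> 1" using F by auto
    have "norm (V2 G2 \<kappa> (real e ^ 2 * y) / of_nat e) = norm (V2 G2 \<kappa> (real e ^ 2 * y)) / real e"
      by (simp add: norm_divide)
    also have "\<dots> \<le> K2 * (real e ^ 2 * y) powr (- \<delta>) / real e"
      using e y by (intro divide_right_mono K2(2)) auto
    also have "\<dots> = K2 * ((real e ^ 2 * y) powr (- \<delta>) / real e)" by simp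
    also have "\<dots> = K2 * y powr (- \<delta>) * real e powr (- (1 + 2 * \<delta>))" using Vterm_eq[OF e y] by simp
    finally show "norm (V2 G2 \<kappa> (real e ^ 2 * y) / of_nat e) \<le> K2 * y powr (- \<delta>) * real e powr (- (1 + 2 * \<delta>))" .
  qed
  also have "\<dots> = K2 * y powr (- \<delta>) * (\<Sum>e\<in>F. real e powr (- (1 + 2 * \<delta>)))" by (simp add: sum_distrib_left)
  also have "\<dots> \<le> K2 * y powr (- \<delta>) * Zd" using K2(1) by (intro mult_left_mono Zd F) auto
  finally show "(\<Sum>e\<in>F. norm (V2 G2 \<kappa> (real e ^ 2 * y) / of_nat e)) \<le> K2 * Zd * y powr (- \<delta>)" by (simp add: mult_ac)
qed



lemma V1_term:
  assumes K1: "\<And>x. x > 0 \<Longrightarrow> norm (V1 G1 \<kappa> x) \<le> K1 * x powr (- \<delta>)" "K1 \<ge> 0"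
    and d: "\<delta> \<ge> 0" and a: "a \<ge> (1::nat)" and x: "x > 0" and e: "e \<ge> (1::nat)" "e' \<ge> (1::nat)"
  shows "norm (V1 G1 \<kappa> (real a * x * real e * real e')) \<le> K1 * (x powr (- \<delta>) * (real e powr (- \<delta>) * real e' powr (- \<delta>)))"
proof -
  have pos: "real a * x * real e * real e' > 0" using a x e by simp
  have "norm (V1 G1 \<kappa> (real a * x * real e * real e')) \<le> K1 * (real a * x * real e * real e') powr (- \<delta>)"
    by (rule K1(1)[OF pos])
  also have "(real a * x * real e * real e') powr (- \<delta>) = real a powr (- \<delta>) * (x powr (- \<delta>) * (real e powr (- \<delta>) * real e' powr (- \<delta>)))"
    using a x e by (simp add: powr_mult mult_ac)
  also have "\<dots> \<le> 1 * (x powr (- \<delta>) * (real e powr (- \<delta>) * real e' powr (- \<delta>)))"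
  proof (rule mult_right_mono)
    have "real a powr (- \<delta>) \<le> real a powr 0" using a d by (intro powr_mono) auto
    then show "real a powr (- \<delta>) \<le> 1" using a by simp
  qed auto
  finally show ?thesis using K1(2) by (simp add: mult_left_mono)
qed

lemma mult3_mono:
  fixes A B C A' B' C' :: real
  assumes "0 \<le> A" "A \<le> A'" "0 \<le> B" "B \<le> B'" "0 \<le> C" "C \<le> C'"
  shows "A * B * C \<le> A' * B' * C'"
  using assms by (meson mult_mono mult_nonneg_nonneg order.trans)

lemma Ffun_bound:
  assumes K1: "\<And>x. x > 0 \<Longrightarrow> norm (V1 G1 \<kappa> x) \<le> K1 * x powr (- \<delta>)" "K1 \<ge> 0"
    and d: "\<delta> \<ge> 0"
    and Zd: "\<And>F. finite F \<Longrightarrow> (\<Sum>k\<in>F. real k powr (- (1 + 2 * \<delta>))) \<le> Zd"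
    and a: "a \<ge> 1" and x: "x1 > 0" "x2 > 0" "x3 > 0"
  shows "norm (Ffun G1 \<kappa> q a x1 x2 x3) \<le> K1 ^ 3 * Zd ^ 3 * (x1 * x2 * x3) powr (- \<delta>)"
  unfolding Ffun_def
proof (rule norm_infsum_le_fin)
  define w where "w e = real e powr (- (1 + 2 * \<delta>))" for e :: nat
  define X where "X = (x1 * x2 * x3) powr (- \<delta>)"
  have X0: "X \<ge> 0" unfolding X_def by simp
  have Zd0: "Zd \<ge> 0" using Zd[of "{}"] by simp
  let ?f = "\<lambda>(e1::nat, e2::nat, e3::nat). V1 G1 \<kappa> (real a * x1 * real e1 * real e2) * V1 G1 \<kappa> (real a * x2 * real e1 * real e3)
        * V1 G1 \<kappa> (real a * x3 * real e2 * real e3) / of_nat (e1 * e2 * e3)"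
  fix F assume F: "finite F" "F \<subseteq> {(e1::nat, e2::nat, e3::nat). e1 \<ge> 1 \<and> e2 \<ge> 1 \<and> e3 \<ge> 1 \<and> coprime (e1 * e2 * e3) q}"
  have tm: "norm (?f t) \<le> K1 ^ 3 * X * (\<lambda>(e1,e2,e3). w e1 * w e2 * w e3) t" if t: "t \<in> F" for t
  proof -
    obtain e1 e2 e3 where teq: "t = (e1, e2, e3)" by (cases t) auto
    have e: "e1 \<ge> 1" "e2 \<ge> 1" "e3 \<ge> 1" using F t teq by auto
    let ?p = "\<lambda>e::nat. real e powr (- \<delta>)"
    have "norm (?f t) = norm (V1 G1 \<kappa> (real a * x1 * real e1 * real e2)) * norm (V1 G1 \<kappa> (real a * x2 * real e1 * real e3))
        * norm (V1 G1 \<kappa> (real a * x3 * real e2 * real e3)) / (real e1 * real e2 * real e3)"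
      unfolding teq by (simp add: norm_mult norm_divide)
    also have "\<dots> \<le> (K1 * (x1 powr (- \<delta>) * (?p e1 * ?p e2))) * (K1 * (x2 powr (- \<delta>) * (?p e1 * ?p e3)))
        * (K1 * (x3 powr (- \<delta>) * (?p e2 * ?p e3))) / (real e1 * real e2 * real e3)"
      by (intro divide_right_mono mult3_mono V1_term[OF K1 d a] x e norm_ge_zero) auto
    also have "\<dots> = K1 ^ 3 * (x1 powr (- \<delta>) * x2 powr (- \<delta>) * x3 powr (- \<delta>)) *
        ((?p e1 * ?p e1 / real e1) * (?p e2 * ?p e2 / real e2) * (?p e3 * ?p e3 / real e3))"
      using e by (simp add: field_simps power3_eq_cube)
    also have "x1 powr (- \<delta>) * x2 powr (- \<delta>) * x3 powr (- \<delta>) = X"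
      unfolding X_def using x by (simp add: powr_mult)
    also have "(?p e1 * ?p e1 / real e1) * (?p e2 * ?p e2 / real e2) * (?p e3 * ?p e3 / real e3) = w e1 * w e2 * w e3"
      unfolding w_def using e by (simp add: w_eq)
    finally show ?thesis unfolding teq by simp
  qed
  define N where "N = Max (insert 0 ((\<lambda>(a,b,c). max a (max b c)) ` F))"
  have sub: "F \<subseteq> {1..N} \<times> {1..N} \<times> {1..N}"
  proof
    fix t assume t: "t \<in> F"
    obtain e1 e2 e3 where teq: "t = (e1, e2, e3)" by (cases t) auto
    have "max e1 (max e2 e3) \<le> N" unfolding N_def using F t teq
      by (intro Max_ge) (auto intro!: image_eqI[of _ _ t])
    then show "t \<in> {1..N} \<times> {1..N} \<times> {1..N}" using F t teq by auto
  qed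
  have W: "(\<Sum>t\<in>F. (\<lambda>(e1,e2,e3). w e1 * w e2 * w e3) t) \<le> Zd ^ 3"
  proof -
    have "(\<Sum>t\<in>F. (\<lambda>(e1,e2,e3). w e1 * w e2 * w e3) t) \<le> (\<Sum>t\<in>{1..N} \<times> {1..N} \<times> {1..N}. (\<lambda>(e1,e2,e3). w e1 * w e2 * w e3) t)"
      by (rule sum_mono2[OF _ sub]) (auto simp: w_def)
    also have "\<dots> = (\<Sum>e\<in>{1..N}. w e) ^ 3" by (rule cube_sum)
    also have "\<dots> \<le> Zd ^ 3" unfolding w_def by (intro power_mono Zd) (auto intro: sum_nonneg)
    finally show ?thesis .
  qed
  have "(\<Sum>t\<in>F. norm (?f t)) \<le> (\<Sum>t\<in>F. K1 ^ 3 * X * (\<lambda>(e1,e2,e3). w e1 * w e2 * w e3) t)"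
    by (rule sum_mono) (rule tm)
  also have "\<dots> = K1 ^ 3 * X * (\<Sum>t\<in>F. (\<lambda>(e1,e2,e3). w e1 * w e2 * w e3) t)"
    by (simp add: sum_distrib_left)
  also have "\<dots> \<le> K1 ^ 3 * X * Zd ^ 3"
    using K1(2) X0 by (intro mult_left_mono W) auto
  finally show "(\<Sum>t\<in>F. norm (?f t)) \<le> K1 ^ 3 * Zd ^ 3 * (x1 * x2 * x3) powr (- \<delta>)"
    unfolding X_def by (simp add: mult_ac)
qed



lemma tau3F_bound:
  assumes FB: "\<And>x1 x2 x3. x1 > 0 \<Longrightarrow> x2 > 0 \<Longrightarrow> x3 > 0 \<Longrightarrow> norm (Ffun G1 \<kappa> q a x1 x2 x3) \<le> B1 * (x1 * x2 * x3) powr (- \<delta>)"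
    and B1: "B1 \<ge> 0" and d: "\<delta> \<ge> 0" and n: "n \<ge> 1" and q: "q \<ge> 1"
  shows "norm (tau3F G1 \<kappa> q a n) \<le> real (card (T3 n)) * B1 * real q powr (2 * \<delta>) * real n powr (- \<delta>)"
proof -
  let ?s = "sqrt (real q)"
  have s0: "?s > 0" using q by simp
  have sq: "?s ^ 3 \<le> real q ^ 2"
  proof -
    have "?s ^ 3 = real q * ?s" by (simp add: power3_eq_cube power2_eq_square[symmetric])
    also have "\<dots> \<le> real q * real q"
    proof (intro mult_left_mono)
      have q1: "1 \<le> real q" using q by simp
      then have "real q * 1 \<le> real q * real q" by (intro mult_left_mono) auto
      then have "sqrt (real q) \<le> sqrt (real q * real q)" by (intro real_sqrt_le_mono) simp
      then show "sqrt (real q) \<le> real q" by simp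
    qed simp
    finally show ?thesis by (simp add: power2_eq_square)
  qed
  have tm: "norm (Ffun G1 \<kappa> q a (real n1 / ?s) (real n2 / ?s) (real n3 / ?s)) \<le> B1 * real q powr (2 * \<delta>) * real n powr (- \<delta>)"
    if t: "(n1, n2, n3) \<in> T3 n" for n1 n2 n3
  proof -
    have prod: "n1 * n2 * n3 = n" using t by (simp add: T3_def)
    then have pos: "n1 > 0" "n2 > 0" "n3 > 0" using n by (auto intro: Nat.gr0I)
    have "norm (Ffun G1 \<kappa> q a (real n1 / ?s) (real n2 / ?s) (real n3 / ?s)) \<le> B1 * (real n1 / ?s * (real n2 / ?s) * (real n3 / ?s)) powr (- \<delta>)"
      using pos s0 by (intro FB) auto
    also have "real n1 / ?s * (real n2 / ?s) * (real n3 / ?s) = real n / ?s ^ 3"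
      using prod[symmetric] by (simp add: power3_eq_cube)
    also have "(real n / ?s ^ 3) powr (- \<delta>) = real n powr (- \<delta>) * (?s ^ 3) powr \<delta>"
    proof -
      have "(real n / ?s ^ 3) powr (- \<delta>) = real n powr (- \<delta>) / (?s ^ 3) powr (- \<delta>)" by (rule powr_divide)
      also have "(?s ^ 3) powr (- \<delta>) = inverse ((?s ^ 3) powr \<delta>)" by (rule powr_minus)
      finally show ?thesis by (simp only: divide_inverse inverse_inverse_eq)
    qed
    finally have A: "norm (Ffun G1 \<kappa> q a (real n1 / ?s) (real n2 / ?s) (real n3 / ?s)) \<le> B1 * (real n powr (- \<delta>) * (?s ^ 3) powr \<delta>)" .
    have "(?s ^ 3) powr \<delta> \<le> (real q ^ 2) powr \<delta>" using sq d s0 by (intro powr_mono2) auto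
    also have "(real q ^ 2) powr \<delta> = real q powr (2 * \<delta>)"
    proof -
      have "real q ^ 2 = real q powr 2" using q by (simp add: powr_numeral)
      then have "(real q ^ 2) powr \<delta> = (real q powr 2) powr \<delta>" by (simp only:)
      also have "\<dots> = real q powr (2 * \<delta>)" by (rule powr_powr)
      finally show ?thesis .
    qed
    finally have P: "(?s ^ 3) powr \<delta> \<le> real q powr (2 * \<delta>)" .
    have "B1 * (real n powr (- \<delta>) * (?s ^ 3) powr \<delta>) \<le> B1 * (real n powr (- \<delta>) * real q powr (2 * \<delta>))"
      using B1 P by (intro mult_left_mono) auto
    with A show ?thesis by (simp add: mult_ac)
  qed
  have fin: "finite (T3 n)" using n by (intro T3_finite) auto
  have "norm (tau3F G1 \<kappa> q a n) \<le> (\<Sum>t\<in>T3 n. norm ((\<lambda>(n1, n2, n3). Ffun G1 \<kappa> q a (real n1 / ?s) (real n2 / ?s) (real n3 / ?s)) t))"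
    unfolding tau3F_def T3_def[symmetric] by (rule norm_sum)
  also have "\<dots> \<le> (\<Sum>t\<in>T3 n. B1 * real q powr (2 * \<delta>) * real n powr (- \<delta>))"
    by (rule sum_mono) (auto intro: tm)
  also have "\<dots> = real (card (T3 n)) * B1 * real q powr (2 * \<delta>) * real n powr (- \<delta>)" by simp
  finally show ?thesis .
qed



lemma inner_bound:
  assumes TB: "\<And>n. n \<ge> 1 \<Longrightarrow> norm (tau3F G1 \<kappa> q a n) \<le> real (card (T3 n)) * B1 * real q powr (2 * \<delta>) * real n powr (- \<delta>)"
    and VB: "\<And>y. y > 0 \<Longrightarrow> norm (Vsum G2 \<kappa> q y) \<le> B2 * y powr (- \<delta>)"
    and B: "B1 \<ge> 0" "B2 \<ge> 0" and d: "\<delta> \<ge> 0"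
    and S: "\<And>F. finite F \<Longrightarrow> 0 \<notin> F \<Longrightarrow> (\<Sum>n\<in>F. divisor_count n * real (card (T3 n)) * real n powr (- (1 + 2 * \<delta>))) \<le> S"
    and a: "a \<ge> 1" and q: "q \<ge> 1"
  shows "norm (\<Sum>\<^sub>\<infinity> (m, n) \<in> {(m::nat, n::nat). m \<ge> 1 \<and> n \<ge> 1 \<and> m = n * a}.
            complex_of_real (divisor_count m) * tau3F G1 \<kappa> q a n
            / complex_of_real (sqrt (real m * real n))
            * Vsum G2 \<kappa> q (real m / real q))
         \<le> divisor_count a * (B1 * B2 * S) * real q powr (3 * \<delta>)"
proof (rule norm_infsum_le_fin)
  let ?f = "\<lambda>(m::nat, n::nat). complex_of_real (divisor_count m) * tau3F G1 \<kappa> q a n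
            / complex_of_real (sqrt (real m * real n)) * Vsum G2 \<kappa> q (real m / real q)"
  define g where "g n = divisor_count a * (B1 * B2) * real q powr (3 * \<delta>) *
      (divisor_count n * real (card (T3 n)) * real n powr (- (1 + 2 * \<delta>)))" for n
  have dca: "divisor_count a \<ge> 0" by (rule divisor_count_nonneg)
  have qp: "real q > 0" using q by simp
  have tm: "norm (?f (n * a, n)) \<le> g n" if n: "n \<ge> 1" for n
  proof -
    let ?m = "n * a"
    have m: "?m \<ge> n" using a by simp
    have np: "real n > 0" using n by simp
    have mr: "real n \<le> real n * real a"
    proof -
      have "real n * 1 \<le> real n * real a" using a np by (intro mult_left_mono) auto
      then show ?thesis by simp
    qed
    have "norm (?f (?m, n)) = divisor_count ?m * norm (tau3F G1 \<kappa> q a n) * norm (Vsum G2 \<kappa> q (real ?m / real q)) / sqrt (real ?m * real n)"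
      by (simp add: norm_mult norm_divide divisor_count_nonneg)
    also have "\<dots> \<le> (divisor_count n * divisor_count a) * (real (card (T3 n)) * B1 * real q powr (2 * \<delta>) * real n powr (- \<delta>))
                     * (B2 * (real q powr \<delta> * real n powr (- \<delta>))) / real n"
    proof (rule frac_le)
      have V: "norm (Vsum G2 \<kappa> q (real ?m / real q)) \<le> B2 * (real q powr \<delta> * real n powr (- \<delta>))"
      proof -
        have "norm (Vsum G2 \<kappa> q (real ?m / real q)) \<le> B2 * (real ?m / real q) powr (- \<delta>)"
          using n a qp by (intro VB) simp
        also have "(real ?m / real q) powr (- \<delta>) \<le> (real n / real q) powr (- \<delta>)"
          using d np qp m by (intro powr_mono2') (auto simp: divide_right_mono)
        also have "(real n / real q) powr (- \<delta>) = real q powr \<delta> * real n powr (- \<delta>)"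
        proof -
          have "(real n / real q) powr (- \<delta>) = real n powr (- \<delta>) / real q powr (- \<delta>)" by (rule powr_divide)
          also have "real q powr (- \<delta>) = inverse (real q powr \<delta>)" by (rule powr_minus)
          finally show ?thesis by (simp only: divide_inverse inverse_inverse_eq mult.commute)
        qed
        finally show ?thesis using B by (simp add: mult_left_mono)
      qed
      show "divisor_count ?m * norm (tau3F G1 \<kappa> q a n) * norm (Vsum G2 \<kappa> q (real ?m / real q))
        \<le> (divisor_count n * divisor_count a) * (real (card (T3 n)) * B1 * real q powr (2 * \<delta>) * real n powr (- \<delta>))
                     * (B2 * (real q powr \<delta> * real n powr (- \<delta>)))"
        by (intro mult3_mono divisor_count_mult TB V divisor_count_nonneg norm_ge_zero) (use n a mr in auto)
      show "0 \<le> (divisor_count n * divisor_count a) * (real (card (T3 n)) * B1 * real q powr (2 * \<delta>) * real n powr (- \<delta>))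
                     * (B2 * (real q powr \<delta> * real n powr (- \<delta>)))"
        using B by (intro mult_nonneg_nonneg divisor_count_nonneg) auto
      show "0 < real n" by (rule np)
      have "sqrt (real n * real n) \<le> sqrt (real ?m * real n)"
        using m mr by (intro real_sqrt_le_mono mult_right_mono) auto
      then show "real n \<le> sqrt (real ?m * real n)" by simp
    qed
    also have "\<dots> = divisor_count a * (B1 * B2) * (real q powr (2 * \<delta>) * real q powr \<delta>) *
       (divisor_count n * real (card (T3 n)) * (real n powr (- \<delta>) * real n powr (- \<delta>) / real n))"
      by (simp add: field_simps)
    also have "real q powr (2 * \<delta>) * real q powr \<delta> = real q powr (3 * \<delta>)"
      by (simp add: powr_add[symmetric])
    also have "real n powr (- \<delta>) * real n powr (- \<delta>) / real n = real n powr (- (1 + 2 * \<delta>))"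
      by (rule w_eq[OF np])
    finally show ?thesis unfolding g_def .
  qed
  fix F assume F: "finite F" "F \<subseteq> {(m::nat, n::nat). m \<ge> 1 \<and> n \<ge> 1 \<and> m = n * a}"
  have "(\<Sum>p\<in>F. norm (?f p)) \<le> (\<Sum>p\<in>F. g (snd p))"
  proof (rule sum_mono)
    fix p assume "p \<in> F"
    then obtain n where "p = (n * a, n)" "n \<ge> 1" using F by auto
    then show "norm (?f p) \<le> g (snd p)" using tm by simp
  qed
  also have "\<dots> = (\<Sum>n\<in>snd ` F. g n)"
  proof (subst sum.reindex)
    show "inj_on snd F"
    proof (rule inj_onI)
      fix p p' assume pp: "p \<in> F" "p' \<in> F" "snd p = snd p'"
      have "fst p = snd p * a" "fst p' = snd p' * a" using pp(1,2) F(2) by auto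
      with pp(3) show "p = p'" by (simp add: prod_eq_iff)
    qed
  qed simp
  also have "\<dots> = divisor_count a * (B1 * B2) * real q powr (3 * \<delta>) *
      (\<Sum>n\<in>snd ` F. divisor_count n * real (card (T3 n)) * real n powr (- (1 + 2 * \<delta>)))"
    unfolding g_def by (simp add: sum_distrib_left)
  also have "\<dots> \<le> divisor_count a * (B1 * B2) * real q powr (3 * \<delta>) * S"
    using F dca B by (intro mult_left_mono S mult_nonneg_nonneg) auto
  finally show "(\<Sum>p\<in>F. norm (?f p)) \<le> divisor_count a * (B1 * B2 * S) * real q powr (3 * \<delta>)"
    by (simp add: mult_ac)
qed



lemma moebius_abs_le: "\<bar>moebius_mu a\<bar> \<le> 1"
  unfolding moebius_mu_def by (simp add: power_abs)

theorem mainTheorem6: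
  fixes \<kappa> :: nat and G1 G2 :: "complex \<Rightarrow> complex" and \<epsilon> :: real
  assumes "\<kappa> > 0" and "even \<kappa>"
    and "admissible_G G1" and "admissible_G G2"
    and "\<epsilon> > 0"
  shows "\<exists>C Q. \<forall>q::nat. prime q \<and> q \<ge> Q \<longrightarrow>
           norm (Dsum G1 G2 \<kappa> q) \<le> C * real q powr \<epsilon>"
proof -
  define \<delta> where "\<delta> = min (\<epsilon>/3) (1/2)"
  have d: "0 < \<delta>" "\<delta> \<le> 1" "3 * \<delta> \<le> \<epsilon>" using assms(5) unfolding \<delta>_def by auto
  obtain K1 where K1: "K1 \<ge> 0" "\<And>x. x > 0 \<Longrightarrow> norm (V1 G1 \<kappa> x) \<le> K1 * x powr (- \<delta>)"
    using V1_bound[OF assms(3) d(1,2), of \<kappa>] by blast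
  obtain K2 where K2: "K2 \<ge> 0" "\<And>x. x > 0 \<Longrightarrow> norm (V2 G2 \<kappa> x) \<le> K2 * x powr (- \<delta>)"
    using V2_bound[OF assms(4) d(1,2), of \<kappa>] by blast
  obtain Zd where Zd: "\<And>F. finite F \<Longrightarrow> (\<Sum>k\<in>F. real k powr (- (1 + 2 * \<delta>))) \<le> Zd"
    using zeta_partial_bound[of "1 + 2 * \<delta>"] d by auto
  obtain S where S: "\<And>F. finite F \<Longrightarrow> 0 \<notin> F \<Longrightarrow>
     (\<Sum>n\<in>F. divisor_count n * real (card (T3 n)) * real n powr (- (1 + 2 * \<delta>))) \<le> S"
    using dc3_sum_bound[of "1 + 2 * \<delta>"] d by auto
  obtain Zt where Zt: "\<And>F. finite F \<Longrightarrow> 0 \<notin> F \<Longrightarrow> (\<Sum>k\<in>F. divisor_count k * real k powr (- (3/2))) \<le> Zt"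
    using dc_sum_bound[of "3/2"] by auto
  have Zd0: "Zd \<ge> 0" using Zd[of "{}"] by simp
  have S0: "S \<ge> 0" using S[of "{}"] by simp
  have Zt0: "Zt \<ge> 0" using Zt[of "{}"] by simp
  define B1 where "B1 = K1 ^ 3 * Zd ^ 3"
  define B2 where "B2 = K2 * Zd"
  have B10: "B1 \<ge> 0" unfolding B1_def using K1 Zd0 by simp
  have B20: "B2 \<ge> 0" unfolding B2_def using K2 Zd0 by simp
  define C where "C = Zt * (B1 * B2 * S)"
  show ?thesis
  proof (intro exI allI impI)
    fix q :: nat assume qa: "prime q \<and> q \<ge> 1"
    have q: "q \<ge> 1" using qa by simp
    define X where "X = B1 * B2 * S * real q powr (3 * \<delta>)"
    have X0: "X \<ge> 0" unfolding X_def using B10 B20 S0 by simp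
    have VB: "\<And>y. y > 0 \<Longrightarrow> norm (Vsum G2 \<kappa> q y) \<le> B2 * y powr (- \<delta>)"
      unfolding B2_def using Vsum_bound[OF K2(1) K2(2) Zd] by blast
    have inner: "norm (\<Sum>\<^sub>\<infinity> (m, n) \<in> {(m::nat, n::nat). m \<ge> 1 \<and> n \<ge> 1 \<and> m = n * a}.
            complex_of_real (divisor_count m) * tau3F G1 \<kappa> q a n
            / complex_of_real (sqrt (real m * real n))
            * Vsum G2 \<kappa> q (real m / real q)) \<le> divisor_count a * X" if a: "a \<ge> 1" for a
    proof -
      have FB: "\<And>x1 x2 x3. x1 > 0 \<Longrightarrow> x2 > 0 \<Longrightarrow> x3 > 0 \<Longrightarrow>
          norm (Ffun G1 \<kappa> q a x1 x2 x3) \<le> B1 * (x1 * x2 * x3) powr (- \<delta>)"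
        unfolding B1_def using Ffun_bound[OF K1(2) K1(1) _ Zd a] d by auto
      have TB: "\<And>n. n \<ge> 1 \<Longrightarrow> norm (tau3F G1 \<kappa> q a n) \<le> real (card (T3 n)) * B1 * real q powr (2 * \<delta>) * real n powr (- \<delta>)"
        using tau3F_bound[OF FB B10 _ _ q] d by auto
      have "norm (\<Sum>\<^sub>\<infinity> (m, n) \<in> {(m::nat, n::nat). m \<ge> 1 \<and> n \<ge> 1 \<and> m = n * a}.
            complex_of_real (divisor_count m) * tau3F G1 \<kappa> q a n
            / complex_of_real (sqrt (real m * real n))
            * Vsum G2 \<kappa> q (real m / real q)) \<le> divisor_count a * (B1 * B2 * S) * real q powr (3 * \<delta>)"
        by (rule inner_bound[OF TB VB B10 B20 _ S a q]) (use d in auto)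
      then show ?thesis unfolding X_def by (simp add: mult_ac)
    qed
    have "norm (Dsum G1 G2 \<kappa> q) \<le> Zt * X"
      unfolding Dsum_def
    proof (rule norm_infsum_le_fin)
      fix F assume F: "finite F" "F \<subseteq> {a::nat. a \<ge> 1 \<and> coprime a q}"
      let ?I = "\<lambda>a. (\<Sum>\<^sub>\<infinity> (m, n) \<in> {(m::nat, n::nat). m \<ge> 1 \<and> n \<ge> 1 \<and> m = n * a}.
            complex_of_real (divisor_count m) * tau3F G1 \<kappa> q a n
            / complex_of_real (sqrt (real m * real n))
            * Vsum G2 \<kappa> q (real m / real q))"
      have "(\<Sum>a\<in>F. norm (complex_of_real (moebius_mu a / real a powr (3/2)) * ?I a))
          \<le> (\<Sum>a\<in>F. X * (divisor_count a * real a powr (- (3/2))))"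
      proof (rule sum_mono)
        fix a assume "a \<in> F"
        then have a: "a \<ge> 1" using F by auto
        have ap: "real a powr (3/2) > 0" using a by simp
        have "norm (complex_of_real (moebius_mu a / real a powr (3/2))) = \<bar>moebius_mu a\<bar> / real a powr (3/2)"
          using ap by (simp only: norm_of_real abs_divide abs_of_pos)
        also have "\<dots> \<le> 1 / real a powr (3/2)"
          using ap moebius_abs_le by (intro divide_right_mono) auto
        also have "\<dots> = real a powr (- (3/2))" by (simp add: powr_minus_divide)
        finally have M: "norm (complex_of_real (moebius_mu a / real a powr (3/2))) \<le> real a powr (- (3/2))" .
        have "norm (complex_of_real (moebius_mu a / real a powr (3/2)) * ?I a)
           = norm (complex_of_real (moebius_mu a / real a powr (3/2))) * norm (?I a)" by (rule norm_mult)
        also have "\<dots> \<le> real a powr (- (3/2)) * (divisor_count a * X)"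
          by (intro mult_mono M inner a) auto
        finally show "norm (complex_of_real (moebius_mu a / real a powr (3/2)) * ?I a)
          \<le> X * (divisor_count a * real a powr (- (3/2)))" by (simp add: mult_ac)
      qed
      also have "\<dots> = X * (\<Sum>a\<in>F. divisor_count a * real a powr (- (3/2)))" by (simp add: sum_distrib_left)
      also have "\<dots> \<le> X * Zt" using X0 F by (intro mult_left_mono Zt) auto
      finally show "(\<Sum>a\<in>F. norm (complex_of_real (moebius_mu a / real a powr (3/2)) * ?I a)) \<le> Zt * X"
        by (simp add: mult_ac)
    qed
    also have "Zt * X = C * real q powr (3 * \<delta>)" unfolding X_def C_def by (simp add: mult_ac)
    also have "\<dots> \<le> C * real q powr \<epsilon>"
      using q d Zt0 B10 B20 S0 unfolding C_def by (intro mult_left_mono powr_mono) auto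
    finally show "norm (Dsum G1 G2 \<kappa> q) \<le> C * real q powr \<epsilon>" .
  qed
qed

end
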